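(* Let $U$ and $V$ be real vector spaces and let $f:V^m\to\mathbb{R}\oplus U$ be an $m$-linear map. Assume there exist $x_1,\dots,x_m,y_1,\dots,y_m\in V$ such that $f(x_1,\dots,x_m)\in\mathbb{R}\setminus\{0\}$ and $f(y_1,\dots,y_m)\notin\mathbb{R}$. Then there exist an index $i\in\{1,\dots,m\}$ and vectors $r_1,\dots,r_m,r_i^*\in V$ such that \[ f(r_1,\dots,r_m)=1\quad\text{and}\quad f(r_1,\dots,r_{i-1},r_i^*,r_{i+1},\dots,r_m)\notin\mathbb{R}. \]
   Context: $\mathbb{R}$ is identified with the summand $\mathbb{R}\oplus 0\subseteq\mathbb{R}\oplus U$. *)

theory Defs
  imports "HOL-Analysis.Analysis"
begin

text \<open>An m-linear map V^m -> W, with V^m represented as lists of length m: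
  for every argument tuple and every position, the map in that position is linear.\<close>
definition multilinear :: "nat \<Rightarrow> ('v::real_vector list \<Rightarrow> 'w::real_vector) \<Rightarrow> bool" where
  "multilinear m f \<longleftrightarrow>
     (\<forall>xs i. length xs = m \<longrightarrow> i < m \<longrightarrow> linear (\<lambda>t. f (xs[i := t])))"

text \<open>R (+) U is real \<times> 'u; R is identified with the summand R \<times> {0}.\<close>
definition in_R :: "real \<times> 'u::real_vector \<Rightarrow> bool" where
  "in_R p \<longleftrightarrow> snd p = 0"

end

theory Submission
  imports Defs
begin

lemma ml_cons:
  assumes "multilinear (Suc m) f"
  shows "multilinear m (\<lambda>w. f (a # w))"
  unfolding multilinear_def
proof (intro allI impI)
  fix xs :: "'a list" and i
  assume "length xs = m" "i < m"
  then have "linear (\<lambda>t. f ((a # xs)[Suc i := t]))"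
    using assms \<open>length xs = m\<close> \<open>i < m\<close> unfolding multilinear_def
    by (metis Suc_less_eq length_Cons)
  then show "linear (\<lambda>t. f (a # xs[i := t]))"
    by simp
qed

lemma ml_add0:
  assumes "multilinear (Suc m) f" "length w = m"
  shows "f ((a + b) # w) = f (a # w) + f (b # w)"
proof -
  have "linear (\<lambda>t. f ((x # w)[0 := t]))" for x
    using assms unfolding multilinear_def by (metis length_Cons zero_less_Suc)
  then have "linear (\<lambda>t. f (t # w))" by simp
  from linear_add[OF this, of a b] show ?thesis by simp
qed

lemma claim:
  fixes f :: "'v::real_vector list \<Rightarrow> real \<times> 'u::real_vector"
  assumes "multilinear m f" "length xs = m" "snd (f xs) = 0" "fst (f xs) \<noteq> 0"
    and H: "\<And>rs i t. length rs = m \<Longrightarrow> i < m \<Longrightarrow> snd (f rs) = 0 \<Longrightarrow> fst (f rs) \<noteq> 0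
              \<Longrightarrow> snd (f (rs[i := t])) = 0"
    and "length w = m"
  shows "snd (f w) = 0"
  using assms
proof (induction m arbitrary: f xs w)
  case 0
  then show ?case by simp
next
  case (Suc m)
  obtain x1 xs' where xs: "xs = x1 # xs'" using Suc.prems(2) by (cases xs) auto
  obtain a w' where w: "w = a # w'" using Suc.prems(6) by (cases w) auto
  have lxs': "length xs' = m" using Suc.prems(2) xs by simp
  have lw': "length w' = m" using Suc.prems(6) w by simp
  have sub: "snd (f (b # v)) = 0"
    if "snd (f (b # xs')) = 0" "fst (f (b # xs')) \<noteq> 0" "length v = m" for b v
  proof -
    have "snd ((\<lambda>w. f (b # w)) v) = 0"
    proof (rule Suc.IH[of "\<lambda>w. f (b # w)" xs'])
      show "multilinear m (\<lambda>w. f (b # w))" using ml_cons Suc.prems(1) by blast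
      fix rs i t assume "length rs = m" "i < m" "snd (f (b # rs)) = 0" "fst (f (b # rs)) \<noteq> 0"
      then have "snd (f ((b # rs)[Suc i := t])) = 0"
        using Suc.prems(5)[of "b # rs" "Suc i" t] by simp
      then show "snd (f (b # rs[i := t])) = 0" by simp
    qed (use that lxs' in auto)
    then show ?thesis by simp
  qed
  have Ha: "snd (f (c # xs')) = 0" for c
    using Suc.prems(5)[of xs 0 c] Suc.prems(2-4) xs by simp
  have hx1: "snd (f (x1 # v)) = 0" if "length v = m" for v
    using sub[of x1 v] Suc.prems(3,4) xs that by simp
  show ?case
  proof (cases "fst (f (a # xs')) = 0")
    case False
    then show ?thesis using sub[of a w'] Ha lw' w by simp
  next
    case True
    have eq: "f ((a + x1) # xs') = f (a # xs') + f (x1 # xs')"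
      using ml_add0[OF Suc.prems(1) lxs'] .
    have "fst (f ((a + x1) # xs')) \<noteq> 0" using eq True Suc.prems(4) xs by simp
    then have s1: "snd (f ((a + x1) # w')) = 0" using sub[of "a + x1" w'] Ha lw' by simp
    have "f ((a + x1) # w') = f (a # w') + f (x1 # w')"
      using ml_add0[OF Suc.prems(1) lw'] .
    then show ?thesis using s1 hx1[OF lw'] w by simp
  qed
qed

theorem mainTheorem11:
  fixes f :: "'v::real_vector list \<Rightarrow> real \<times> 'u::real_vector" and m :: nat
  assumes "multilinear m f"
    and "length xs = m" and "in_R (f xs)" and "f xs \<noteq> 0"
    and "length ys = m" and "\<not> in_R (f ys)"
  shows "\<exists>i rs r. i < m \<and> length rs = m \<and> f rs = (1, 0) \<and> \<not> in_R (f (rs[i := r]))"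
proof (rule ccontr)
  assume neg: "\<not> ?thesis"
  have H: "snd (f (rs[i := t])) = 0"
    if "length rs = m" "i < m" "snd (f rs) = 0" "fst (f rs) \<noteq> 0" for rs i t
  proof -
    define c where "c = fst (f rs)"
    define rs' where "rs' = rs[i := (1 / c) *\<^sub>R (rs ! i)]"
    have lin: "linear (\<lambda>t. f (rs[i := t]))" using assms(1) that unfolding multilinear_def by auto
    have "f rs' = (1 / c) *\<^sub>R f (rs[i := rs ! i])"
      unfolding rs'_def using linear_scale[OF lin] by simp
    also have "\<dots> = (1, 0)" using that c_def
      by (simp add: prod_eq_iff)
    finally have "f rs' = (1, 0)" .
    moreover have "length rs' = m" using that rs'_def by simp
    moreover have "rs'[i := t] = rs[i := t]" unfolding rs'_def by simp
    ultimately show ?thesis using neg that unfolding in_R_def by metis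
  qed
  have "snd (f xs) = 0" "fst (f xs) \<noteq> 0" using assms(3,4) unfolding in_R_def
    by (auto simp: prod_eq_iff)
  then have "snd (f ys) = 0" using claim[OF assms(1) assms(2) _ _ H assms(5)] by blast
  then show False using assms(6) unfolding in_R_def by simp
qed

end
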